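(* Let $m\ge1$ be an integer and $\mu=\lfloor m/3\rfloor$. The group $\mathbb{Z}_m$ contains $\mu$ additively disjoint pairs if and only if $m\not\equiv 6\pmod{12}$. If $m\equiv 6\pmod{12}$, then the maximum number of additively disjoint pairs in $\mathbb{Z}_m$ is $\mu-1$.
   Context: For a finite abelian group $A$, a family of $n$ additively disjoint pairs in $A$ is a family $(a_i,b_i)\in A^2$, $1\le i\le n$, such that the $3n$ elements $a_1,b_1,\ldots,a_n,b_n,a_1+b_1,\ldots,a_n+b_n$ are pairwise distinct. $A$ is called maximally additively disjoint (MAD) if it contains $\lfloor |A|/3\rfloor$ additively disjoint pairs. *)

theory Defs
  imports Main
begin

text \<open>The cyclic group Z_m is modelled by the residues {0..<m} with addition modulo m.\<close>

definition add_disjoint_pairs :: "nat \<Rightarrow> (nat \<times> nat) list \<Rightarrow> bool" where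
  "add_disjoint_pairs m ps \<longleftrightarrow>
     (\<forall>(a, b) \<in> set ps. a < m \<and> b < m) \<and>
     distinct (map fst ps @ map snd ps @ map (\<lambda>(a, b). (a + b) mod m) ps)"

end

theory Submission
  imports Defs
begin

definition sk :: "(nat \<times> nat) list \<Rightarrow> nat \<Rightarrow> nat \<Rightarrow> nat \<Rightarrow> bool" where
 "sk L n N h \<longleftrightarrow> distinct (map fst L @ map snd L) \<and> distinct (map (\<lambda>p. snd p - fst p) L) \<and>
   (\<forall>p\<in>set L. 0 < fst p \<and> fst p < snd p \<and> snd p \<le> N \<and> fst p \<noteq> h \<and> snd p \<noteq> h \<and> snd p - fst p \<le> n) \<and> length L = n"
definition fam0 :: "nat \<Rightarrow> (nat \<times> nat) list" where
  "fam0 t = map (\<lambda>r. (1+r, 4*t+7-r)) [0..<2*t+3] @ map (\<lambda>r. (4*t+8+r, 8*t+15-r)) [0..<t+2] @ map (\<lambda>r. (5*t+12+r, 7*t+13-r)) [0..<t] @ [(5*t+10, 5*t+11), (6*t+13, 8*t+16), (2*t+4, 6*t+12)]"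

definition fam1 :: "nat \<Rightarrow> (nat \<times> nat) list" where
  "fam1 t = map (\<lambda>r. (1+r, 4*t+3-r)) [0..<2*t+1] @ map (\<lambda>r. (4*t+4+r, 8*t+9-r)) [0..<t] @ map (\<lambda>r. (5*t+4+r, 7*t+7-r)) [0..<t+1] @ [(7*t+8, 7*t+9), (6*t+5, 8*t+10), (2*t+2, 6*t+6)]"

definition fam2 :: "nat \<Rightarrow> (nat \<times> nat) list" where
  "fam2 t = map (\<lambda>r. (1+r, 4*t+5-r)) [0..<2*t+2] @ map (\<lambda>r. (4*t+6+r, 8*t+11-r)) [0..<t+1] @ map (\<lambda>r. (5*t+9+r, 7*t+10-r)) [0..<t] @ [(5*t+7, 5*t+8), (6*t+10, 8*t+13), (2*t+3, 6*t+9)]"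

definition fam3 :: "nat \<Rightarrow> (nat \<times> nat) list" where
  "fam3 t = map (\<lambda>r. (1+r, 4*t+5-r)) [0..<2*t+2] @ map (\<lambda>r. (4*t+6+r, 8*t+13-r)) [0..<t] @ map (\<lambda>r. (5*t+6+r, 7*t+11-r)) [0..<t+2] @ [(7*t+12, 7*t+13), (6*t+8, 8*t+15), (2*t+3, 6*t+9)]"

definition famR :: "nat \<Rightarrow> (nat \<times> nat) list" where
  "famR t = map (\<lambda>r. (1+r, 4*t+7-r)) [0..<2*t+3] @ map (\<lambda>r. (4*t+9+r, 8*t+14-r)) [0..<t] @ map (\<lambda>r. (5*t+9+r, 7*t+12-r)) [0..<t+1] @ [(7*t+13, 7*t+14), (6*t+10, 8*t+15), (2*t+4, 6*t+11)]"
lemma sk_fam0: "sk (fam0 t) (4*t+8) (2*(4*t+8)) 0"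
  unfolding sk_def fam0_def
  apply (simp add: distinct_append distinct_map inj_on_def o_def)
  apply (intro conjI)
  apply auto
  apply presburger+
  done
lemma sk_fam1: "sk (fam1 t) (4*t+5) (2*(4*t+5)) 0"
  unfolding sk_def fam1_def
  apply (simp add: distinct_append distinct_map inj_on_def o_def)
  apply (intro conjI)
  apply auto
  apply presburger+
  done
lemma sk_fam2: "sk (fam2 t) (4*t+6) (2*(4*t+6)+1) (2*(4*t+6))"
  unfolding sk_def fam2_def
  apply (simp add: distinct_append distinct_map inj_on_def o_def)
  apply (intro conjI)
  apply auto
  apply presburger+
  done
lemma sk_fam3: "sk (fam3 t) (4*t+7) (2*(4*t+7)+1) (2*(4*t+7))"
  unfolding sk_def fam3_def
  apply (simp add: distinct_append distinct_map inj_on_def o_def)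
  apply (intro conjI)
  apply auto
  apply presburger+
  done
lemma sk_famR: "sk (famR t) (4*t+7) (2*(4*t+7)+1) ((4*t+7)+1)"
  unfolding sk_def famR_def
  apply (simp add: distinct_append distinct_map inj_on_def o_def)
  apply (intro conjI)
  apply auto
  apply presburger+
  done



lemma sk_small:
  "sk [] 0 0 0" "sk [(1,2)] 1 2 0" "sk [(1,5),(3,6),(2,4),(7,8)] 4 8 0"
  "sk [(3,5),(1,2)] 2 5 4" "sk [(1,4),(5,7),(2,3)] 3 7 6" "sk [(2,5),(1,3),(6,7)] 3 7 4"
  by (simp_all add: sk_def)

lemma skolem_ex: assumes "n mod 4 = 0 \<or> n mod 4 = 1" shows "\<exists>L. sk L n (2*n) 0"
proof -
  have "n = 0 \<or> n = 1 \<or> n = 4 \<or> (\<exists>t. n = 4*t+5) \<or> (\<exists>t. n = 4*t+8)" using assms by presburger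
  then show ?thesis
  proof (elim disjE exE)
    assume "n = 0"
    then show ?thesis using sk_small(1) by (intro exI[of _ "[]"]) simp
  next
    assume "n = 1"
    then show ?thesis using sk_small(2) by (intro exI[of _ "[(1,2)]"]) simp
  next
    assume "n = 4"
    then show ?thesis using sk_small(3) by (intro exI[of _ "[(1,5),(3,6),(2,4),(7,8)]"]) simp
  next
    fix t assume "n = 4*t+5"
    then show ?thesis using sk_fam1[of t] by (intro exI[of _ "fam1 t"]) simp
  next
    fix t assume "n = 4*t+8"
    then show ?thesis using sk_fam0[of t] by (intro exI[of _ "fam0 t"]) simp
  qed
qed

lemma hooked_ex: assumes "n mod 4 = 2 \<or> n mod 4 = 3" shows "\<exists>L. sk L n (2*n+1) (2*n)"
proof -
  have "n = 2 \<or> n = 3 \<or> (\<exists>t. n = 4*t+6) \<or> (\<exists>t. n = 4*t+7)" using assms by presburger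
  then show ?thesis
  proof (elim disjE exE)
    assume "n = 2"
    then show ?thesis using sk_small(4) by (intro exI[of _ "[(3,5),(1,2)]"]) simp
  next
    assume "n = 3"
    then show ?thesis using sk_small(5) by (intro exI[of _ "[(1,4),(5,7),(2,3)]"]) simp
  next
    fix t assume "n = 4*t+6"
    then show ?thesis using sk_fam2[of t] by (intro exI[of _ "fam2 t"]) simp
  next
    fix t assume "n = 4*t+7"
    then show ?thesis using sk_fam3[of t] by (intro exI[of _ "fam3 t"]) simp
  qed
qed

lemma rosa_ex: assumes "n mod 4 = 3" shows "\<exists>L. sk L n (2*n+1) (n+1)"
proof -
  have "n = 3 \<or> (\<exists>t. n = 4*t+7)" using assms by presburger
  then show ?thesis
  proof (elim disjE exE)
    assume "n = 3"
    then show ?thesis using sk_small(6) by (intro exI[of _ "[(2,5),(1,3),(6,7)]"]) simp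
  next
    fix t assume "n = 4*t+7"
    then show ?thesis using sk_famR[of t] by (intro exI[of _ "famR t"]) simp
  qed
qed

lemma core:
  fixes f g h :: "'a \<Rightarrow> nat"
  assumes "\<forall>x\<in>set L. (f x + g x) mod m = h x mod m"
    and "distinct (map (\<lambda>v. v mod m) (map f L @ map g L @ map h L))" and "0 < m"
  shows "add_disjoint_pairs m (map (\<lambda>x. (f x mod m, g x mod m)) L)"
proof -
  have eq: "map (\<lambda>x. (f x mod m + g x mod m) mod m) L = map (\<lambda>x. h x mod m) L"
    using assms(1) by (auto simp: mod_add_eq)
  show ?thesis using assms(2,3) unfolding add_disjoint_pairs_def
    by (simp add: o_def eq)
qed

lemma mod_inj_range:
  fixes x y lo m :: nat
  assumes "lo \<le> x" "x < lo + m" "lo \<le> y" "y < lo + m" "x mod m = y mod m"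
  shows "x = y"
proof -
  have *: "a = b" if "lo \<le> a" "b < lo + m" "a \<le> b" "a mod m = b mod m" for a b :: nat
  proof -
    have "m dvd (b - a)" using mod_eq_dvd_iff_nat[OF that(3), of m] that(4) by metis
    moreover have "b - a < m" using that(1,2,3) by arith
    ultimately have "b - a = 0" using nat_dvd_not_less by (cases "b - a = 0") auto
    then show "a = b" using that(3) by simp
  qed
  show ?thesis
  proof (cases "x \<le> y")
    case True then show ?thesis using * assms by blast
  next
    case False then show ?thesis using *[of y x] assms by simp
  qed
qed

lemma mod_distinct:
  fixes vs :: "nat list"
  assumes "distinct vs" "\<forall>v\<in>set vs. lo \<le> v \<and> v < lo + m"
  shows "distinct (map (\<lambda>v. v mod m) vs)"
  using assms by (auto simp: distinct_map inj_on_def intro: mod_inj_range)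

lemma wrapA:
  assumes "sk L n N h" "n + N \<le> m" "0 < m"
  shows "\<exists>ps. add_disjoint_pairs m ps \<and> length ps = n"
proof -
  let ?f = "\<lambda>p::nat\<times>nat. snd p - fst p" and ?g = "\<lambda>p::nat\<times>nat. fst p + n" and ?h = "\<lambda>p::nat\<times>nat. snd p + n"
  have sk: "distinct (map fst L @ map snd L)" "distinct (map ?f L)"
     "\<forall>p\<in>set L. 0 < fst p \<and> fst p < snd p \<and> snd p \<le> N \<and> snd p - fst p \<le> n" "length L = n"
    using assms(1) unfolding sk_def by auto
  have d1: "distinct (map ?g L @ map ?h L)"
  proof -
    have e: "map ?g L @ map ?h L = map (\<lambda>x. x + n) (map fst L @ map snd L)" by simp
    have "distinct (map (\<lambda>x. x + n) (map fst L @ map snd L))"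
      using sk(1) by (simp only: distinct_map) (auto simp: inj_on_def)
    then show ?thesis by (simp only: e)
  qed
  have dj: "\<forall>p\<in>set L. \<forall>q\<in>set L. snd p - fst p \<noteq> fst q + n \<and> snd p - fst p \<noteq> snd q + n"
  proof (intro ballI)
    fix p q assume p: "p \<in> set L" and q: "q \<in> set L"
    have "snd p - fst p \<le> n" "0 < fst q" "fst q < snd q" using sk(3) p q by auto
    then show "snd p - fst p \<noteq> fst q + n \<and> snd p - fst p \<noteq> snd q + n" by linarith
  qed
  have "distinct (map ?f L @ map ?g L @ map ?h L)"
    using sk(2) d1 dj by (auto simp: distinct_append)
  moreover have "\<forall>v\<in>set (map ?f L @ map ?g L @ map ?h L). 1 \<le> v \<and> v < 1 + m"
    using sk(3) assms(2) by fastforce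
  ultimately have "distinct (map (\<lambda>v. v mod m) (map ?f L @ map ?g L @ map ?h L))"
    by (rule mod_distinct)
  moreover have "\<forall>x\<in>set L. (?f x + ?g x) mod m = ?h x mod m" using sk(3) by auto
  moreover have "0 < m" using assms by simp
  ultimately have "add_disjoint_pairs m (map (\<lambda>x. (?f x mod m, ?g x mod m)) L)"
    by (intro core) auto
  then show ?thesis using sk(4) by (intro exI[of _ "map (\<lambda>x. (?f x mod m, ?g x mod m)) L"]) auto
qed


lemma wrapB:
  assumes "sk L n (2*n+1) (n+1)" "m = 3*n" "n \<ge> 1"
  shows "\<exists>ps. add_disjoint_pairs m ps \<and> length ps = n"
proof -
  define f where "f = (\<lambda>p::nat\<times>nat. if snd p - fst p = n then 2*n else snd p - fst p)"
  define g where "g = (\<lambda>p::nat\<times>nat. if snd p - fst p = n then snd p + n - 1 else fst p + n - 1)"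
  define h where "h = (\<lambda>p::nat\<times>nat. if snd p - fst p = n then fst p + n - 1 else snd p + n - 1)"
  have sk: "distinct (map fst L @ map snd L)" "distinct (map (\<lambda>p. snd p - fst p) L)"
     "\<forall>p\<in>set L. 0 < fst p \<and> fst p < snd p \<and> snd p \<le> 2*n+1 \<and> fst p \<noteq> n+1 \<and> snd p \<noteq> n+1 \<and> snd p - fst p \<le> n"
     "length L = n"
    using assms(1) unfolding sk_def by auto
  have F1: "\<forall>p\<in>set L. \<forall>q\<in>set L. fst p = fst q \<longrightarrow> p = q"
    using sk(1) by (auto simp: distinct_append distinct_map inj_on_def)
  have F2: "\<forall>p\<in>set L. \<forall>q\<in>set L. snd p = snd q \<longrightarrow> p = q"
    using sk(1) by (auto simp: distinct_append distinct_map inj_on_def)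
  have F3: "\<forall>p\<in>set L. \<forall>q\<in>set L. fst p \<noteq> snd q"
    using sk(1) by (auto simp: distinct_append)
  have F4: "\<forall>p\<in>set L. \<forall>q\<in>set L. snd p - fst p = snd q - fst q \<longrightarrow> p = q"
    using sk(2) by (auto simp: distinct_map inj_on_def)
  have dL: "distinct L" using sk(1) by (simp add: distinct_append distinct_map)
  have df: "distinct (map f L)"
    unfolding distinct_map
  proof
    show "distinct L" by (rule dL)
    show "inj_on f (set L)"
    proof (rule inj_onI)
      fix p q assume p: "p \<in> set L" and q: "q \<in> set L" and e: "f p = f q"
      have bp: "0 < fst p" "fst p < snd p" "snd p - fst p \<le> n" using sk(3) p by auto
      have bq: "0 < fst q" "fst q < snd q" "snd q - fst q \<le> n" using sk(3) q by auto
      show "p = q"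
      proof (cases "snd p - fst p = n"; cases "snd q - fst q = n")
        assume a: "snd p - fst p = n" "snd q - fst q = n"
        then have "snd p - fst p = snd q - fst q" using e bp bq assms(3) by (simp add: f_def)
        then show "p = q" using F4 p q by metis
      next
        assume a: "snd p - fst p = n" "snd q - fst q \<noteq> n"
        then have "False" using e bp bq assms(3) by (simp add: f_def)
        then show "p = q" by simp
      next
        assume a: "snd p - fst p \<noteq> n" "snd q - fst q = n"
        then have "False" using e bp bq assms(3) by (simp add: f_def)
        then show "p = q" by simp
      next
        assume a: "snd p - fst p \<noteq> n" "snd q - fst q \<noteq> n"
        then have "snd p - fst p = snd q - fst q" using e bp bq assms(3) by (simp add: f_def)
        then show "p = q" using F4 p q by metis
      qed
    qed
  qed
  have dg: "distinct (map g L)"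
    unfolding distinct_map
  proof
    show "distinct L" by (rule dL)
    show "inj_on g (set L)"
    proof (rule inj_onI)
      fix p q assume p: "p \<in> set L" and q: "q \<in> set L" and e: "g p = g q"
      have bp: "0 < fst p" "fst p < snd p" "snd p - fst p \<le> n" using sk(3) p by auto
      have bq: "0 < fst q" "fst q < snd q" "snd q - fst q \<le> n" using sk(3) q by auto
      show "p = q"
      proof (cases "snd p - fst p = n"; cases "snd q - fst q = n")
        assume a: "snd p - fst p = n" "snd q - fst q = n"
        then have "snd p = snd q" using e bp bq assms(3) by (simp add: g_def)
        then show "p = q" using F2 p q by metis
      next
        assume a: "snd p - fst p = n" "snd q - fst q \<noteq> n"
        then have "snd p = fst q" using e bp bq assms(3) by (simp add: g_def)
        then show "p = q" using F3 p q by metis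
      next
        assume a: "snd p - fst p \<noteq> n" "snd q - fst q = n"
        then have "fst p = snd q" using e bp bq assms(3) by (simp add: g_def)
        then show "p = q" using F3 p q by metis
      next
        assume a: "snd p - fst p \<noteq> n" "snd q - fst q \<noteq> n"
        then have "fst p = fst q" using e bp bq assms(3) by (simp add: g_def)
        then show "p = q" using F1 p q by metis
      qed
    qed
  qed
  have dh: "distinct (map h L)"
    unfolding distinct_map
  proof
    show "distinct L" by (rule dL)
    show "inj_on h (set L)"
    proof (rule inj_onI)
      fix p q assume p: "p \<in> set L" and q: "q \<in> set L" and e: "h p = h q"
      have bp: "0 < fst p" "fst p < snd p" "snd p - fst p \<le> n" using sk(3) p by auto
      have bq: "0 < fst q" "fst q < snd q" "snd q - fst q \<le> n" using sk(3) q by auto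
      show "p = q"
      proof (cases "snd p - fst p = n"; cases "snd q - fst q = n")
        assume a: "snd p - fst p = n" "snd q - fst q = n"
        then have "fst p = fst q" using e bp bq assms(3) by (simp add: h_def)
        then show "p = q" using F1 p q by metis
      next
        assume a: "snd p - fst p = n" "snd q - fst q \<noteq> n"
        then have "fst p = snd q" using e bp bq assms(3) by (simp add: h_def)
        then show "p = q" using F3 p q by metis
      next
        assume a: "snd p - fst p \<noteq> n" "snd q - fst q = n"
        then have "snd p = fst q" using e bp bq assms(3) by (simp add: h_def)
        then show "p = q" using F3 p q by metis
      next
        assume a: "snd p - fst p \<noteq> n" "snd q - fst q \<noteq> n"
        then have "snd p = snd q" using e bp bq assms(3) by (simp add: h_def)
        then show "p = q" using F2 p q by metis
      qed
    qed
  qed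
  have dgh: "set (map g L) \<inter> set (map h L) = {}"
  proof -
    { fix p q assume p: "p \<in> set L" and q: "q \<in> set L" and e: "g p = h q"
      have False
      proof (cases "snd p - fst p = n"; cases "snd q - fst q = n")
        assume a: "snd p - fst p = n" "snd q - fst q = n"
        then have "snd p = fst q" using e sk(3) p q assms(3) by (simp add: g_def h_def)
        then show False using F3 p q by metis
      next
        assume a: "snd p - fst p = n" "snd q - fst q \<noteq> n"
        then have "snd p = snd q" using e sk(3) p q assms(3) by (simp add: g_def h_def)
        then show False using F2 p q a by metis
      next
        assume a: "snd p - fst p \<noteq> n" "snd q - fst q = n"
        then have "fst p = fst q" using e sk(3) p q assms(3) by (simp add: g_def h_def)
        then show False using F1 p q a by metis
      next
        assume a: "snd p - fst p \<noteq> n" "snd q - fst q \<noteq> n"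
        then have "fst p = snd q" using e sk(3) p q assms(3) by (simp add: g_def h_def)
        then show False using F3 p q by metis
      qed }
    then show ?thesis by auto
  qed
  have dfgh: "set (map f L) \<inter> (set (map g L) \<union> set (map h L)) = {}"
  proof -
    { fix p q assume p: "p \<in> set L" and q: "q \<in> set L"
      have bp: "0 < fst p" "fst p < snd p" "snd p - fst p \<le> n" "snd p \<le> 2*n+1" "fst p \<noteq> n+1" "snd p \<noteq> n+1"
        using sk(3) p by auto
      have bq: "0 < fst q" "fst q < snd q" "snd q - fst q \<le> n" "snd q \<le> 2*n+1" "fst q \<noteq> n+1" "snd q \<noteq> n+1"
        using sk(3) q by auto
      have "f p \<noteq> g q \<and> f p \<noteq> h q"
      proof (cases "snd p - fst p = n"; cases "snd q - fst q = n")
        assume a: "snd p - fst p = n" "snd q - fst q = n"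
        have v: "f p = 2*n" "g q = snd q + n - 1" "h q = fst q + n - 1" using a unfolding f_def g_def h_def by simp_all
        show ?thesis unfolding v using a bp bq assms(3) by arith
      next
        assume a: "snd p - fst p = n" "snd q - fst q \<noteq> n"
        have v: "f p = 2*n" "g q = fst q + n - 1" "h q = snd q + n - 1" using a unfolding f_def g_def h_def by simp_all
        show ?thesis unfolding v using a bp bq assms(3) by arith
      next
        assume a: "snd p - fst p \<noteq> n" "snd q - fst q = n"
        have v: "f p = snd p - fst p" "g q = snd q + n - 1" "h q = fst q + n - 1" using a unfolding f_def g_def h_def by simp_all
        show ?thesis unfolding v using a bp bq assms(3) by arith
      next
        assume a: "snd p - fst p \<noteq> n" "snd q - fst q \<noteq> n"
        have v: "f p = snd p - fst p" "g q = fst q + n - 1" "h q = snd q + n - 1" using a unfolding f_def g_def h_def by simp_all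
        show ?thesis unfolding v using a bp bq assms(3) by arith
      qed }
    then show ?thesis by auto
  qed
  have "distinct (map f L @ map g L @ map h L)"
    using df dg dh dgh dfgh by (simp add: distinct_append)
  moreover have "\<forall>v\<in>set (map f L @ map g L @ map h L). 1 \<le> v \<and> v < 1 + m"
    using sk(3) assms(2,3) unfolding f_def g_def h_def by (auto split: if_splits)
  ultimately have "distinct (map (\<lambda>v. v mod m) (map f L @ map g L @ map h L))"
    by (rule mod_distinct)
  moreover have "\<forall>x\<in>set L. (f x + g x) mod m = h x mod m"
  proof
    fix x assume x: "x \<in> set L"
    show "(f x + g x) mod m = h x mod m"
    proof (cases "snd x - fst x = n")
      case True
      then have "f x + g x = h x + m" using sk(3) x assms(2,3) unfolding f_def g_def h_def by auto
      then show ?thesis by simp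
    next
      case False
      then have "f x + g x = h x" using sk(3) x assms(2,3) unfolding f_def g_def h_def by auto
      then show ?thesis by simp
    qed
  qed
  moreover have "0 < m" using assms by simp
  ultimately have "add_disjoint_pairs m (map (\<lambda>x. (f x mod m, g x mod m)) L)"
    by (intro core) auto
  then show ?thesis using sk(4) by (intro exI[of _ "map (\<lambda>x. (f x mod m, g x mod m)) L"]) auto
qed

lemma vals_props:
  assumes "add_disjoint_pairs m ps" "0 < m"
  defines "xs \<equiv> map fst ps @ map snd ps @ map (\<lambda>(a, b). (a + b) mod m) ps"
  shows "distinct xs" "set xs \<subseteq> {..<m}" "card (set xs) = 3 * length ps"
proof -
  show d: "distinct xs" using assms(1) unfolding add_disjoint_pairs_def xs_def by simp
  show "set xs \<subseteq> {..<m}" using assms(1,2) unfolding add_disjoint_pairs_def xs_def by auto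
  show "card (set xs) = 3 * length ps" using distinct_card[OF d] unfolding xs_def by simp
qed

lemma ub:
  assumes "add_disjoint_pairs m ps" "0 < m"
  shows "3 * length ps \<le> m"
proof -
  note v = vals_props[OF assms]
  have "card (set (map fst ps @ map snd ps @ map (\<lambda>(a, b). (a + b) mod m) ps)) \<le> card {..<m}"
    by (rule card_mono[OF _ v(2)]) simp
  then show ?thesis using v(3) by simp
qed

lemma double_sum_lt: "2 * (\<Sum>i<m. i) = m * (m - 1::nat)"
proof (induct m)
  case 0 then show ?case by simp
next
  case (Suc m)
  have "2 * (\<Sum>i<Suc m. i) = 2 * (\<Sum>i<m. i) + 2 * m" by simp
  also have "\<dots> = m * (m - 1) + 2 * m" using Suc by simp
  also have "\<dots> = Suc m * m" by (cases m) (simp_all add: algebra_simps)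
  finally show ?case by simp
qed


lemma even_sum_list: "(\<And>x. x \<in> set xs \<Longrightarrow> even (f x)) \<Longrightarrow> even (sum_list (map f xs :: nat list))"
  by (induct xs) auto

lemma imp6:
  assumes "add_disjoint_pairs m ps" "m mod 12 = 6" "length ps = m div 3"
  shows False
proof -
  have m0: "0 < m" using assms(2) by presburger
  let ?xs = "map fst ps @ map snd ps @ map (\<lambda>(a, b). (a + b) mod m) ps"
  note v = vals_props[OF assms(1) m0]
  have "3 * length ps = m" using assms(2,3) by presburger
  then have "card (set ?xs) = card {..<m}" using v(3) by simp
  then have S: "set ?xs = {..<m}" using v(2) by (intro card_subset_eq) auto
  have "sum_list ?xs = sum id (set ?xs)"
    using sum_list_distinct_conv_sum_set[OF v(1), of id] by simp
  also have "\<dots> = (\<Sum>i<m. i)" using S by simp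
  finally have e1: "sum_list ?xs = (\<Sum>i<m. i)" .
  have "sum_list ?xs = sum_list (map (\<lambda>p. fst p + snd p + (fst p + snd p) mod m) ps)"
    by (induct ps) (auto simp: case_prod_beta)
  moreover have "even (sum_list (map (\<lambda>p. fst p + snd p + (fst p + snd p) mod m) ps))"
  proof (rule even_sum_list)
    fix p :: "nat \<times> nat"
    have em: "even m" using assms(2) by presburger
    have "(fst p + snd p) mod m mod 2 = (fst p + snd p) mod 2"
      using em by (simp add: mod_mod_cancel)
    moreover have "\<And>x r. r mod 2 = x mod 2 \<Longrightarrow> even (x + r::nat)" by presburger
    ultimately show "even (fst p + snd p + (fst p + snd p) mod m)" by blast
  qed
  ultimately have ev: "even (\<Sum>i<m. i)" using e1 by simp
  define k where "k = m div 12"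
  have k: "m = 12*k+6" using assms(2) unfolding k_def by presburger
  have "2 * (\<Sum>i<m. i) = 2 * ((6*k+3) * (12*k+5))"
    using double_sum_lt[of m] k by (simp add: algebra_simps)
  then have "(\<Sum>i<m. i) = (6*k+3) * (12*k+5)" by simp
  moreover have "odd ((6*k+3) * (12*k+5))" by simp
  ultimately show False using ev by simp
qed

lemma ar1: "m mod 12 \<noteq> (6::nat) \<Longrightarrow> (m div 3 mod 4 = 0 \<or> m div 3 mod 4 = 1) \<or> ((m div 3 mod 4 = 2 \<or> m div 3 mod 4 = 3) \<and> m mod 3 \<noteq> 0) \<or> (m div 3 mod 4 = 3 \<and> m mod 3 = 0)"
  by presburger
lemma ar2: "m mod 3 \<noteq> 0 \<Longrightarrow> m div 3 + (2*(m div 3)+1) \<le> (m::nat)"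
  by presburger
lemma ar3: "m mod 3 = 0 \<Longrightarrow> m = 3 * (m div 3::nat)"
  by presburger
lemma ar4: assumes "m mod 12 = (6::nat)" shows "(m div 3 - 1) mod 4 = 1"
proof -
  have "m div 3 = 4*(m div 12)+2" using assms by presburger
  then show ?thesis by simp
qed

lemma ar5: "m div 3 + 2*(m div 3) \<le> (m::nat)"
  by presburger
lemma ar6: "(m div 3 - 1) + 2*(m div 3 - 1) \<le> (m::nat)"
  by presburger
lemma ar7: "3 * l \<le> m \<Longrightarrow> l \<le> (m::nat) div 3"
  by presburger

theorem theorem9p2:
  fixes m :: nat
  assumes "m \<ge> 1"
  shows "((\<exists>ps. add_disjoint_pairs m ps \<and> length ps = m div 3) \<longleftrightarrow> m mod 12 \<noteq> 6) \<and>
         (m mod 12 = 6 \<longrightarrow>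
           (\<exists>ps. add_disjoint_pairs m ps \<and> length ps = m div 3 - 1) \<and>
           (\<forall>ps. add_disjoint_pairs m ps \<longrightarrow> length ps \<le> m div 3 - 1))"
proof -
  have m0: "0 < m" using assms by simp
  have ex: "\<exists>ps. add_disjoint_pairs m ps \<and> length ps = m div 3" if h12: "m mod 12 \<noteq> 6"
  proof -
    from ar1[OF h12] consider "m div 3 mod 4 = 0 \<or> m div 3 mod 4 = 1"
      | "(m div 3 mod 4 = 2 \<or> m div 3 mod 4 = 3) \<and> m mod 3 \<noteq> 0"
      | "m div 3 mod 4 = 3 \<and> m mod 3 = 0" by blast
    then show ?thesis
    proof cases
      case 1
      from skolem_ex[OF 1] obtain L where "sk L (m div 3) (2*(m div 3)) 0" by (elim exE)
      from wrapA[OF this ar5[of m] m0] show ?thesis .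
    next
      case 2
      from hooked_ex[OF conjunct1[OF 2]] obtain L where "sk L (m div 3) (2*(m div 3)+1) (2*(m div 3))" by (elim exE)
      from wrapA[OF this ar2[OF conjunct2[OF 2]] m0] show ?thesis .
    next
      case 3
      from rosa_ex[OF conjunct1[OF 3]] obtain L where L: "sk L (m div 3) (2*(m div 3)+1) (m div 3+1)" by (elim exE)
      have "m div 3 \<noteq> 0" using 3 by (intro notI) simp
      then have "1 \<le> m div 3" by simp
      from wrapB[OF L ar3[OF conjunct2[OF 3]] this] show ?thesis .
    qed
  qed
  have ex6: "\<exists>ps. add_disjoint_pairs m ps \<and> length ps = m div 3 - 1" if h: "m mod 12 = 6"
  proof -
    have "(m div 3 - 1) mod 4 = 0 \<or> (m div 3 - 1) mod 4 = 1" using ar4[OF h] by simp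
    from skolem_ex[OF this] obtain L where "sk L (m div 3 - 1) (2*(m div 3 - 1)) 0" by (elim exE)
    from wrapA[OF this ar6[of m] m0] show ?thesis .
  qed
  have ubd: "length ps \<le> m div 3" if "add_disjoint_pairs m ps" for ps
    using ar7[OF ub[OF that m0]] .
  have no6: "\<not> (\<exists>ps. add_disjoint_pairs m ps \<and> length ps = m div 3)" if "m mod 12 = 6"
    using imp6 that by blast
  show ?thesis
  proof (intro conjI impI)
    show "(\<exists>ps. add_disjoint_pairs m ps \<and> length ps = m div 3) \<longleftrightarrow> m mod 12 \<noteq> 6"
      using ex no6 by blast
  next
    assume "m mod 12 = 6"
    then show "\<exists>ps. add_disjoint_pairs m ps \<and> length ps = m div 3 - 1"
      using ex6 by blast
  next
    assume h: "m mod 12 = 6"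
    show "\<forall>ps. add_disjoint_pairs m ps \<longrightarrow> length ps \<le> m div 3 - 1"
    proof (intro allI impI)
      fix ps assume a: "add_disjoint_pairs m ps"
      have "length ps \<le> m div 3" using ubd[OF a] .
      moreover have "length ps \<noteq> m div 3" using no6[OF h] a by blast
      ultimately show "length ps \<le> m div 3 - 1" by simp
    qed
  qed
qed


end
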